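(* Let $n,m\ge1$ be integers (not necessarily distinct). Then for the Ramsey number $\mathcal{R}_{\mathcal{II}}$ with respect to the class $\mathcal{II}$ of inclusion ideal graphs, \[ \mathcal{R}_{\mathcal{II}}(n,m)=\mathcal{R}_{\mathcal{PO}}(n,m)=(n-1)(m-1)+1 . \]
   Context: For a ring $R$ (with $1\ne0$, not necessarily commutative), a left ideal $I$ is non-trivial if $I\ne\{0\}$ and $I\ne R$. The inclusion ideal graph $\mathrm{In}(R)$ is the simple undirected graph whose vertices are the non-trivial left ideals of $R$, distinct $I,J$ adjacent iff $I\subset J$ or $J\subset I$; $\mathcal{II}$ is the class of all inclusion ideal graphs. $\mathcal{PO}$ is the class of partial order graphs $G_A$ of posets $(A,\le)$ (vertex set $A$, distinct $a,b$ adjacent iff $a\le b$ or $b\le a$). For a class $\mathcal{C}$ of graphs, $\mathcal{R}_{\mathcal{C}}(n,m)$ is the minimal $r$ such that every induced subgraph with $r$ vertices of any graph in $\mathcal{C}$ contains either $K_n$ or an independent set of $m$ vertices. *)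

theory Defs
  imports "HOL-Algebra.Ring" "HOL-Algebra.AbelCoset"
begin

definition is_clique :: "('v \<Rightarrow> 'v \<Rightarrow> bool) \<Rightarrow> 'v set \<Rightarrow> bool" where
  "is_clique adj K \<longleftrightarrow> (\<forall>x\<in>K. \<forall>y\<in>K. x \<noteq> y \<longrightarrow> adj x y)"

definition is_indep :: "('v \<Rightarrow> 'v \<Rightarrow> bool) \<Rightarrow> 'v set \<Rightarrow> bool" where
  "is_indep adj I \<longleftrightarrow> (\<forall>x\<in>I. \<forall>y\<in>I. x \<noteq> y \<longrightarrow> \<not> adj x y)"

definition ramsey_prop :: "'v set \<Rightarrow> ('v \<Rightarrow> 'v \<Rightarrow> bool) \<Rightarrow> nat \<Rightarrow> nat \<Rightarrow> nat \<Rightarrow> bool" where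
  "ramsey_prop V adj n m r \<longleftrightarrow>
     (\<forall>S. S \<subseteq> V \<and> finite S \<and> card S = r \<longrightarrow>
        (\<exists>K\<subseteq>S. card K = n \<and> is_clique adj K) \<or> (\<exists>I\<subseteq>S. card I = m \<and> is_indep adj I))"

definition left_ideal :: "'a set \<Rightarrow> ('a, 'b) ring_scheme \<Rightarrow> bool" where
  "left_ideal I R \<longleftrightarrow> additive_subgroup I R \<and>
     (\<forall>a\<in>carrier R. \<forall>x\<in>I. a \<otimes>\<^bsub>R\<^esub> x \<in> I)"

definition nontriv_left_ideals :: "('a, 'b) ring_scheme \<Rightarrow> 'a set set" where
  "nontriv_left_ideals R = {I. left_ideal I R \<and> I \<noteq> {\<zero>\<^bsub>R\<^esub>} \<and> I \<noteq> carrier R}"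

definition incl_adj :: "'a set \<Rightarrow> 'a set \<Rightarrow> bool" where
  "incl_adj I J \<longleftrightarrow> I \<subset> J \<or> J \<subset> I"

definition II_ramsey :: "('a, 'b) ring_scheme \<Rightarrow> nat \<Rightarrow> nat \<Rightarrow> nat \<Rightarrow> bool" where
  "II_ramsey R n m r = ramsey_prop (nontriv_left_ideals R) incl_adj n m r"

definition po_adj :: "'a rel \<Rightarrow> 'a \<Rightarrow> 'a \<Rightarrow> bool" where
  "po_adj Le a b \<longleftrightarrow> (a, b) \<in> Le \<or> (b, a) \<in> Le"

definition PO_ramsey :: "'a set \<Rightarrow> 'a rel \<Rightarrow> nat \<Rightarrow> nat \<Rightarrow> nat \<Rightarrow> bool" where
  "PO_ramsey A Le n m r = ramsey_prop A (po_adj Le) n m r"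

end

theory Submission
  imports Defs "HOL-Computational_Algebra.Primes" "HOL-Algebra.IntRing"
begin


lemma min_below:
  assumes fin: "finite S" and irr: "\<And>x. x \<in> S \<Longrightarrow> \<not> lt x x"
    and tr: "\<And>x y z. x \<in> S \<Longrightarrow> y \<in> S \<Longrightarrow> z \<in> S \<Longrightarrow> lt x y \<Longrightarrow> lt y z \<Longrightarrow> lt x z"
  shows "x \<in> S \<Longrightarrow> \<exists>z\<in>S. (\<forall>y\<in>S. \<not> lt y z) \<and> (z = x \<or> lt z x)"
proof (induction "card {y\<in>S. lt y x}" arbitrary: x rule: less_induct)
  case less
  show ?case
  proof (cases "\<forall>y\<in>S. \<not> lt y x")
    case True then show ?thesis using less.prems by blast
  next
    case False
    then obtain y where y: "y \<in> S" "lt y x" by blast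
    have sub: "{z\<in>S. lt z y} \<subset> {z\<in>S. lt z x}"
      using y irr tr less.prems by blast
    have "card {z\<in>S. lt z y} < card {z\<in>S. lt z x}"
      by (rule psubset_card_mono) (use fin sub in auto)
    from less.hyps[OF this y(1)] obtain z where
      "z \<in> S" "\<forall>y\<in>S. \<not> lt y z" "z = y \<or> lt z y" by blast
    then show ?thesis using y tr less.prems by blast
  qed
qed

lemma mirsky:
  assumes irr: "\<And>x. x \<in> S \<Longrightarrow> \<not> lt x x"
    and tr: "\<And>x y z. x \<in> S \<Longrightarrow> y \<in> S \<Longrightarrow> z \<in> S \<Longrightarrow> lt x y \<Longrightarrow> lt y z \<Longrightarrow> lt x z"
    and adj: "\<And>x y. x \<in> S \<Longrightarrow> y \<in> S \<Longrightarrow> x \<noteq> y \<Longrightarrow> adj x y \<longleftrightarrow> lt x y \<or> lt y x"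
    and fin: "finite S" and cs: "card S \<ge> k * (m - 1) + 1" and m: "m \<ge> 1"
  shows "(\<exists>K\<subseteq>S. card K = Suc k \<and> is_clique adj K) \<or> (\<exists>I\<subseteq>S. card I = m \<and> is_indep adj I)"
  using irr tr adj fin cs
proof (induction k arbitrary: S)
  case 0
  then obtain x where "x \<in> S" by fastforce
  then show ?case by (intro disjI1 exI[of _ "{x}"]) (auto simp: is_clique_def)
next
  case (Suc k)
  define M where "M = {x\<in>S. \<forall>y\<in>S. \<not> lt y x}"
  have MS: "M \<subseteq> S" unfolding M_def by auto
  have Mind: "is_indep adj M" unfolding is_indep_def M_def using Suc.prems(3) by blast
  show ?case
  proof (cases "card M \<ge> m")
    case True
    then obtain I where "I \<subseteq> M" "card I = m" by (meson obtain_subset_with_card_n)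
    then have "is_indep adj I" using Mind unfolding is_indep_def by blast
    then show ?thesis using \<open>I \<subseteq> M\<close> \<open>card I = m\<close> MS by blast
  next
    case False
    have fM: "finite M" using MS Suc.prems(4) finite_subset by blast
    have "card (S - M) = card S - card M" using card_Diff_subset[OF fM MS] .
    moreover have "Suc k * (m - 1) = (m - 1) + k * (m - 1)" by simp
    ultimately have c2: "card (S - M) \<ge> k * (m - 1) + 1" using False Suc.prems(5) by linarith
    have "(\<exists>K\<subseteq>S - M. card K = Suc k \<and> is_clique adj K) \<or> (\<exists>I\<subseteq>S - M. card I = m \<and> is_indep adj I)"
      by (rule Suc.IH) (use Suc.prems c2 in auto)
    then show ?thesis
    proof
      assume "\<exists>I\<subseteq>S - M. card I = m \<and> is_indep adj I"
      then show ?thesis by blast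
    next
      assume "\<exists>K\<subseteq>S - M. card K = Suc k \<and> is_clique adj K"
      then obtain K where K: "K \<subseteq> S - M" "card K = Suc k" "is_clique adj K" by blast
      have fK: "finite K" using K(2) card.infinite by force
      obtain x where x: "x \<in> K" using K(2) by fastforce
      obtain c where c: "c \<in> K" "\<forall>y\<in>K. \<not> lt y c"
        using min_below[of K lt x, OF fK _ _ x] Suc.prems(1,2) K(1) by blast
      have cmin: "\<forall>y\<in>K. y \<noteq> c \<longrightarrow> lt c y"
        using c K Suc.prems(3) unfolding is_clique_def by blast
      have "c \<in> S" "c \<notin> M" using c K(1) by auto
      then obtain y where y: "y \<in> S" "lt y c" unfolding M_def by blast
      obtain z where z: "z \<in> S" "\<forall>w\<in>S. \<not> lt w z" "z = y \<or> lt z y"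
        using min_below[of S lt y, OF Suc.prems(4) _ _ y(1)] Suc.prems(1,2) by blast
      have zM: "z \<in> M" using z unfolding M_def by blast
      have zc: "lt z c" using z y Suc.prems(2) \<open>c \<in> S\<close> by blast
      have zK: "z \<notin> K" using zM K(1) by blast
      have zw: "lt z w" if "w \<in> K" for w
      proof (cases "w = c")
        case True with zc show ?thesis by simp
      next
        case False
        with cmin that have "lt c w" by blast
        moreover have "w \<in> S" using that K(1) by blast
        ultimately show ?thesis using Suc.prems(2)[OF z(1) \<open>c \<in> S\<close> \<open>w \<in> S\<close> zc] by blast
      qed
      have zadj: "adj z w \<and> adj w z" if "w \<in> K" for w
      proof -
        have "w \<in> S" "w \<noteq> z" using that K(1) zK by auto
        then show ?thesis using Suc.prems(3)[OF z(1) \<open>w \<in> S\<close>] Suc.prems(3)[OF \<open>w \<in> S\<close> z(1)] zw[OF that] by auto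
      qed
      have "is_clique adj (insert z K)"
        using K(3) zadj unfolding is_clique_def by blast
      moreover have "card (insert z K) = Suc (Suc k)" using zK fK K(2) by simp
      moreover have "insert z K \<subseteq> S" using K(1) z(1) by blast
      ultimately show ?thesis by blast
    qed
  qed
qed

lemma mirsky_ramsey:
  assumes irr: "\<And>x. x \<in> V \<Longrightarrow> \<not> lt x x"
    and tr: "\<And>x y z. x \<in> V \<Longrightarrow> y \<in> V \<Longrightarrow> z \<in> V \<Longrightarrow> lt x y \<Longrightarrow> lt y z \<Longrightarrow> lt x z"
    and adj: "\<And>x y. x \<in> V \<Longrightarrow> y \<in> V \<Longrightarrow> x \<noteq> y \<Longrightarrow> adj x y \<longleftrightarrow> lt x y \<or> lt y x"
    and n: "n \<ge> 1" and m: "m \<ge> 1"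
  shows "ramsey_prop V adj n m ((n - 1) * (m - 1) + 1)"
  unfolding ramsey_prop_def
proof (intro allI impI)
  fix S assume S: "S \<subseteq> V \<and> finite S \<and> card S = (n - 1) * (m - 1) + 1"
  have "(\<exists>K\<subseteq>S. card K = Suc (n - 1) \<and> is_clique adj K) \<or> (\<exists>I\<subseteq>S. card I = m \<and> is_indep adj I)"
  proof (rule mirsky[where lt = lt])
    show "\<And>x. x \<in> S \<Longrightarrow> \<not> lt x x" using S irr by blast
    show "\<And>x y z. x \<in> S \<Longrightarrow> y \<in> S \<Longrightarrow> z \<in> S \<Longrightarrow> lt x y \<Longrightarrow> lt y z \<Longrightarrow> lt x z"
      using S tr by (meson subsetD)
    show "\<And>x y. x \<in> S \<Longrightarrow> y \<in> S \<Longrightarrow> x \<noteq> y \<Longrightarrow> adj x y \<longleftrightarrow> lt x y \<or> lt y x"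
      using S adj by (meson subsetD)
  qed (use S m in auto)
  then show "(\<exists>K\<subseteq>S. card K = n \<and> is_clique adj K) \<or> (\<exists>I\<subseteq>S. card I = m \<and> is_indep adj I)"
    using n by simp
qed



lemma ramsey_zero:
  assumes "n \<ge> 1" "m \<ge> 1" shows "\<not> ramsey_prop V adj n m 0"
  unfolding ramsey_prop_def using assms by (intro notI) (drule spec[of _ "{}"], auto)

lemma lower:
  assumes N: "N \<ge> 1" and r: "r \<le> N * M" and inj: "inj_on g {0..<r}" and gV: "g ` {0..<r} \<subseteq> V"
    and adj: "\<And>k l. k \<in> {0..<r} \<Longrightarrow> l \<in> {0..<r} \<Longrightarrow> k \<noteq> l \<Longrightarrow> (adj (g k) (g l) \<longleftrightarrow> k div N = l div N)"
  shows "\<not> ramsey_prop V adj (Suc N) (Suc M) r"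
proof
  assume R: "ramsey_prop V adj (Suc N) (Suc M) r"
  define S where "S = g ` {0..<r}"
  have cS: "card S = r" unfolding S_def using card_image[OF inj] by simp
  have pre: "\<exists>K0. K0 \<subseteq> {0..<r} \<and> g ` K0 = K \<and> card K0 = card K \<and> inj_on g K0" if "K \<subseteq> S" for K
  proof -
    define K0 where "K0 = {k\<in>{0..<r}. g k \<in> K}"
    have gK: "g ` K0 = K" using that unfolding K0_def S_def by auto
    have ij: "inj_on g K0" by (rule inj_on_subset[OF inj]) (auto simp: K0_def)
    have "card K0 = card K" using card_image[OF ij] gK by simp
    moreover have "K0 \<subseteq> {0..<r}" by (auto simp: K0_def)
    ultimately show ?thesis using gK ij by blast
  qed
  from R have "(\<exists>K\<subseteq>S. card K = Suc N \<and> is_clique adj K) \<or> (\<exists>I\<subseteq>S. card I = Suc M \<and> is_indep adj I)"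
    unfolding ramsey_prop_def using gV cS S_def by auto
  then show False
  proof
    assume "\<exists>K\<subseteq>S. card K = Suc N \<and> is_clique adj K"
    then obtain K where K: "K \<subseteq> S" "card K = Suc N" "is_clique adj K" by blast
    obtain K0 where K0: "K0 \<subseteq> {0..<r}" "g ` K0 = K" "card K0 = Suc N" "inj_on g K0"
      using pre[OF K(1)] unfolding K(2) by blast
    have "K0 \<noteq> {}" using K0(3) by (metis card.empty nat.distinct(1))
    then obtain k0 where k0: "k0 \<in> K0" by blast
    have blk: "k div N = k0 div N" if "k \<in> K0" for k
    proof (cases "k = k0")
      case False
      have "g k \<noteq> g k0" using K0(4) that k0 False by (meson inj_on_def)
      moreover have "g k \<in> K" "g k0 \<in> K" using K0(2) that k0 by auto
      ultimately have "adj (g k) (g k0)" using K(3) unfolding is_clique_def by blast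
      then show ?thesis using adj[of k k0] False that k0 K0(1) by blast
    qed simp
    have "inj_on (\<lambda>k. k mod N) K0"
    proof (rule inj_onI)
      fix k l assume "k \<in> K0" "l \<in> K0" "k mod N = l mod N"
      then have e1: "k mod N = l mod N" and e2: "k div N = l div N" using blk[of k] blk[of l] by auto
      have "k = k div N * N + k mod N" by simp
      also have "\<dots> = l div N * N + l mod N" unfolding e1 e2 ..
      also have "\<dots> = l" by simp
      finally show "k = l" .
    qed
    moreover have "(\<lambda>k. k mod N) ` K0 \<subseteq> {0..<N}" using N by auto
    ultimately have "card K0 \<le> card {0..<N}" by (meson card_inj_on_le finite_atLeastLessThan)
    then show False using K0(3) by simp
  next
    assume "\<exists>I\<subseteq>S. card I = Suc M \<and> is_indep adj I"
    then obtain I where I: "I \<subseteq> S" "card I = Suc M" "is_indep adj I" by blast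
    obtain I0 where I0: "I0 \<subseteq> {0..<r}" "g ` I0 = I" "card I0 = Suc M" "inj_on g I0"
      using pre[OF I(1)] unfolding I(2) by blast
    have "inj_on (\<lambda>k. k div N) I0"
    proof (rule inj_onI)
      fix k l assume kl: "k \<in> I0" "l \<in> I0" "k div N = l div N"
      show "k = l"
      proof (rule ccontr)
        assume ne: "k \<noteq> l"
        have "g k \<noteq> g l" using I0(4) kl ne by (meson inj_on_def)
        moreover have "g k \<in> I" "g l \<in> I" using I0(2) kl by auto
        ultimately have "\<not> adj (g k) (g l)" using I(3) unfolding is_indep_def by blast
        then show False using adj[of k l] ne kl I0(1) by blast
      qed
    qed
    moreover have "(\<lambda>k. k div N) ` I0 \<subseteq> {0..<M}"
    proof
      fix x assume "x \<in> (\<lambda>k. k div N) ` I0"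
      then obtain k where "k \<in> I0" "x = k div N" by blast
      then have "k < N * M" using I0(1) r by auto
      then show "x \<in> {0..<M}" using \<open>x = k div N\<close> N
        by (simp add: less_mult_imp_div_less mult.commute)
    qed
    ultimately have "card I0 \<le> card {0..<M}" by (meson card_inj_on_le finite_atLeastLessThan)
    then show False using I0(3) by simp
  qed
qed

lemma po_lower:
  assumes N: "N \<ge> 1" and r: "r \<le> N * M"
  shows "\<exists>(A :: nat set) Le. partial_order_on A Le \<and> \<not> PO_ramsey A Le (Suc N) (Suc M) r"
proof (intro exI conjI)
  define Le where "Le = {(k::nat,l). k div N = l div N \<and> k \<le> l}"
  show "partial_order_on UNIV Le"
    unfolding Le_def partial_order_on_def preorder_on_def refl_on_def trans_def antisym_def by auto
  show "\<not> PO_ramsey UNIV Le (Suc N) (Suc M) r"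
    unfolding PO_ramsey_def
    by (rule lower[where g = id, OF N r]) (auto simp: po_adj_def Le_def)
qed

lemma pidl_subset: "{x * a | x::int. True} \<subseteq> {x * b | x. True} \<longleftrightarrow> b dvd a"
proof
  assume "{x * a | x::int. True} \<subseteq> {x * b | x. True}"
  then have "1 * a \<in> {x * b | x. True}" by blast
  then show "b dvd a" by auto
next
  assume "b dvd a"
  then obtain c where "a = b * c" by blast
  then show "{x * a | x::int. True} \<subseteq> {x * b | x. True}"
    by auto
qed

lemma pidl_left_ideal: "left_ideal {x * a | x::int. True} \<Z>"
proof -
  have "ideal (PIdl\<^bsub>\<Z>\<^esub> a) \<Z>" by (rule int.cgenideal_ideal) simp
  moreover have "PIdl\<^bsub>\<Z>\<^esub> a = {x * a | x::int. True}" by (simp add: cgenideal_def)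
  ultimately have I: "ideal {x * a | x::int. True} \<Z>" by simp
  show ?thesis unfolding left_ideal_def
    using ideal.axioms(1)[OF I] ideal.I_l_closed[OF I] by auto
qed

lemma ii_lower:
  assumes N: "N \<ge> 1" and r: "r \<le> N * M"
  shows "\<not> II_ramsey \<Z> (Suc N) (Suc M) r"
proof -
  obtain p :: "nat \<Rightarrow> nat" where p: "inj p" "range p \<subseteq> {q. prime q}"
  proof -
    have "\<exists>f::nat\<Rightarrow>nat. inj f \<and> range f \<subseteq> {q. prime q}"
      using primes_infinite unfolding infinite_iff_countable_subset .
    then show ?thesis using that by blast
  qed
  have pp: "prime (p i)" for i using p(2) by auto
  define d where "d k = p (k div N) ^ (k mod N + 1)" for k
  have d2: "d k \<ge> 2" for k
  proof -
    have "p (k div N) \<ge> 2" using pp[of "k div N"] prime_ge_2_nat by blast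
    then have "p (k div N) ^ 1 \<le> d k" unfolding d_def by (intro power_increasing) auto
    then show ?thesis using \<open>p (k div N) \<ge> 2\<close> by simp
  qed
  have dvd_blk: "d k dvd d l \<Longrightarrow> k div N = l div N" for k l
  proof -
    assume "d k dvd d l"
    moreover have "p (k div N) dvd d k" unfolding d_def by simp
    ultimately have "p (k div N) dvd d l" by (rule dvd_trans[rotated])
    then have "p (k div N) dvd p (l div N)" unfolding d_def using pp prime_dvd_power by blast
    then have "p (k div N) = p (l div N)" using pp primes_dvd_imp_eq by blast
    then show ?thesis using p(1) by (meson injD)
  qed
  have blk_dvd: "d k dvd d l \<or> d l dvd d k" if b: "k div N = l div N" for k l
  proof (cases "k mod N \<le> l mod N")
    case True
    then have "d k dvd d l" unfolding d_def b by (intro le_imp_power_dvd) simp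
    then show ?thesis ..
  next
    case False
    then have "d l dvd d k" unfolding d_def b by (intro le_imp_power_dvd) simp
    then show ?thesis ..
  qed
  have dinj: "d k = d l \<Longrightarrow> k = l" for k l
  proof -
    assume e: "d k = d l"
    then have b: "k div N = l div N" using dvd_blk by simp
    have "p (k div N) > 1" using pp prime_gt_1_nat by blast
    moreover have "p (k div N) ^ (k mod N + 1) = p (k div N) ^ (l mod N + 1)" using e b unfolding d_def by simp
    ultimately have "k mod N = l mod N" using power_inject_exp by simp
    note e1 = this
    have "k = k div N * N + k mod N" by simp
    also have "\<dots> = l div N * N + l mod N" unfolding e1 b ..
    also have "\<dots> = l" by simp
    finally show "k = l" .
  qed
  define g where "g k = {x * int (d k) | x. True}" for k
  have gsub: "g k \<subseteq> g l \<longleftrightarrow> d l dvd d k" for k l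
    unfolding g_def pidl_subset by simp
  have ginj: "g k = g l \<Longrightarrow> k = l" for k l
  proof -
    assume "g k = g l"
    then have "d l dvd d k" "d k dvd d l" using gsub[of k l] gsub[of l k] by auto
    then have "d k = d l" by (rule dvd_antisym[rotated])
    then show "k = l" by (rule dinj)
  qed
  have gV: "g k \<in> nontriv_left_ideals \<Z>" for k
  proof -
    have "int (d k) \<in> g k" unfolding g_def by (metis (mono_tags, lifting) mem_Collect_eq mult_1)
    moreover have "int (d k) \<noteq> 0" using d2[of k] by simp
    moreover have "1 \<notin> g k"
    proof
      assume "1 \<in> g k"
      then obtain x where "1 = x * int (d k)" unfolding g_def by auto
      then have "int (d k) dvd int 1" by (metis dvd_triv_right of_nat_1)
      then have "d k dvd 1" by (simp only: of_nat_dvd_iff)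
      then show False using d2[of k] by simp
    qed
    ultimately have "g k \<noteq> {0}" "g k \<noteq> UNIV" by blast+
    moreover have "left_ideal (g k) \<Z>" unfolding g_def by (rule pidl_left_ideal)
    ultimately show ?thesis unfolding nontriv_left_ideals_def by simp
  qed
  show ?thesis unfolding II_ramsey_def
  proof (rule lower[where g = g, OF N r])
    show "inj_on g {0..<r}" by (rule inj_onI) (rule ginj)
    show "g ` {0..<r} \<subseteq> nontriv_left_ideals \<Z>" using gV by blast
    fix k l :: nat assume "k \<in> {0..<r}" "l \<in> {0..<r}" "k \<noteq> l"
    have "g k \<noteq> g l"
    proof
      assume "g k = g l"
      then have "k = l" by (rule ginj)
      then show False using \<open>k \<noteq> l\<close> by simp
    qed
    then have "incl_adj (g k) (g l) \<longleftrightarrow> d l dvd d k \<or> d k dvd d l"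
      using gsub[of k l] gsub[of l k] unfolding incl_adj_def by blast
    then show "incl_adj (g k) (g l) \<longleftrightarrow> k div N = l div N"
      using dvd_blk[of l k] dvd_blk[of k l] blk_dvd[of k l] by metis
  qed
qed


theorem theorem3p12:
  fixes n m :: nat
  assumes "n \<ge> 1" and "m \<ge> 1"
  shows "(\<forall>R :: ('a, 'b) ring_scheme. ring R \<and> \<one>\<^bsub>R\<^esub> \<noteq> \<zero>\<^bsub>R\<^esub> \<longrightarrow>
            II_ramsey R n m ((n - 1) * (m - 1) + 1))
       \<and> (\<forall>r < (n - 1) * (m - 1) + 1. \<exists>R :: int ring.
            ring R \<and> \<one>\<^bsub>R\<^esub> \<noteq> \<zero>\<^bsub>R\<^esub> \<and> \<not> II_ramsey R n m r)
       \<and> (\<forall>(A :: 'c set) Le. partial_order_on A Le \<longrightarrow>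
            PO_ramsey A Le n m ((n - 1) * (m - 1) + 1))
       \<and> (\<forall>r < (n - 1) * (m - 1) + 1. \<exists>(A :: nat set) Le.
            partial_order_on A Le \<and> \<not> PO_ramsey A Le n m r)"
proof (intro conjI)
  show "\<forall>R :: ('a, 'b) ring_scheme. ring R \<and> \<one>\<^bsub>R\<^esub> \<noteq> \<zero>\<^bsub>R\<^esub> \<longrightarrow>
            II_ramsey R n m ((n - 1) * (m - 1) + 1)"
  proof (intro allI impI)
    fix R :: "('a, 'b) ring_scheme"
    show "II_ramsey R n m ((n - 1) * (m - 1) + 1)"
      unfolding II_ramsey_def
    proof (rule mirsky_ramsey[where lt = "(\<subset>)"])
      show "\<And>x y z. x \<subset> y \<Longrightarrow> y \<subset> z \<Longrightarrow> x \<subset> z" by blast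
    qed (use assms in \<open>auto simp: incl_adj_def\<close>)
  qed
  show "\<forall>(A :: 'c set) Le. partial_order_on A Le \<longrightarrow>
            PO_ramsey A Le n m ((n - 1) * (m - 1) + 1)"
  proof (intro allI impI)
    fix A :: "'c set" and Le assume po: "partial_order_on A Le"
    then have tr: "trans Le" and an: "antisym Le"
      unfolding partial_order_on_def preorder_on_def by auto
    show "PO_ramsey A Le n m ((n - 1) * (m - 1) + 1)"
      unfolding PO_ramsey_def
    proof (rule mirsky_ramsey[where lt = "\<lambda>x y. (x, y) \<in> Le \<and> x \<noteq> y"])
      fix x y z assume "(x, y) \<in> Le \<and> x \<noteq> y" "(y, z) \<in> Le \<and> y \<noteq> z"
      then show "(x, z) \<in> Le \<and> x \<noteq> z" using tr an unfolding trans_def antisym_def by blast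
    qed (use assms in \<open>auto simp: po_adj_def\<close>)
  qed
  have zr: "n \<ge> 2 \<and> m \<ge> 2" if "r < (n - 1) * (m - 1) + 1" "r \<noteq> 0" for r
  proof -
    have "(n - 1) * (m - 1) \<noteq> 0" using that by linarith
    then have "n - 1 \<noteq> 0" "m - 1 \<noteq> 0" by auto
    then show ?thesis by linarith
  qed
  show "\<forall>r < (n - 1) * (m - 1) + 1. \<exists>R :: int ring.
            ring R \<and> \<one>\<^bsub>R\<^esub> \<noteq> \<zero>\<^bsub>R\<^esub> \<and> \<not> II_ramsey R n m r"
  proof (intro allI impI)
    fix r assume r: "r < (n - 1) * (m - 1) + 1"
    have "\<not> II_ramsey \<Z> n m r"
    proof (cases "r = 0")
      case True
      then show ?thesis unfolding II_ramsey_def using ramsey_zero assms by simp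
    next
      case False
      then have nm: "n \<ge> 2" "m \<ge> 2" using zr r by auto
      have "\<not> II_ramsey \<Z> (Suc (n - 1)) (Suc (m - 1)) r"
        by (rule ii_lower) (use nm r in auto)
      then show ?thesis using nm by simp
    qed
    moreover have "ring \<Z>" by (rule int.ring_axioms)
    ultimately show "\<exists>R :: int ring. ring R \<and> \<one>\<^bsub>R\<^esub> \<noteq> \<zero>\<^bsub>R\<^esub> \<and> \<not> II_ramsey R n m r"
      by (intro exI[of _ "\<Z>"]) simp
  qed
  show "\<forall>r < (n - 1) * (m - 1) + 1. \<exists>(A :: nat set) Le.
            partial_order_on A Le \<and> \<not> PO_ramsey A Le n m r"
  proof (intro allI impI)
    fix r assume r: "r < (n - 1) * (m - 1) + 1"
    show "\<exists>(A :: nat set) Le. partial_order_on A Le \<and> \<not> PO_ramsey A Le n m r"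
    proof (cases "r = 0")
      case True
      have "partial_order_on {} ({} :: nat rel)"
        unfolding partial_order_on_def preorder_on_def refl_on_def trans_def antisym_def by simp
      moreover have "\<not> PO_ramsey {} ({} :: nat rel) n m r"
        unfolding PO_ramsey_def using ramsey_zero assms True by simp
      ultimately show ?thesis by blast
    next
      case False
      then have nm: "n \<ge> 2" "m \<ge> 2" using zr r by auto
      have "\<exists>(A :: nat set) Le. partial_order_on A Le \<and> \<not> PO_ramsey A Le (Suc (n - 1)) (Suc (m - 1)) r"
        by (rule po_lower) (use nm r in auto)
      then show ?thesis using nm by simp
    qed
  qed
qed

end
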